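(* Assume the current syndrome $\sigma$ is non-empty. (i) If $\sigma \subseteq \{v_1\}\times C_2$ for some fixed $v_1\in V_1$ (a horizontal line), then every set $F\in\mathcal F$ with $\mathrm{score}(F)=\max_{F'\in\mathcal F}\mathrm{score}(F')>0$ satisfies $F\subseteq \{v_1\}\times V_2$. (ii) Symmetrically, if $\sigma\subseteq V_1\times\{c_2\}$ for some fixed $c_2\in C_2$ (a vertical line), then every set $F\in\mathcal F$ with $\mathrm{score}(F)=\max_{F'\in\mathcal F}\mathrm{score}(F')>0$ satisfies $F\subseteq C_1\times\{c_2\}$. In other words, the only sets that Small-Set-Flip can flip in this situation lie on the line $\{v_1\}\times V_2$ (resp. $C_1\times\{c_2\}$).
   Context: Let $G=(V\cup C,E)$ be a connected bipartite graph that is $(\Delta_V,\Delta_C)$-biregular (every vertex of $V$ has degree $\Delta_V$, every vertex of $C$ has degree $\Delta_C$), with $\Delta_V,\Delta_C\ge 2$. For a vertex $x$, $\Gamma(x)$ denotes its set of neighbours in $G$. Let $G_1=(V_1\cup C_1,E_1)$ and $G_2=(V_2\cup C_2,E_2)$ be two copies of $G$. The hypergraph product code has qubit set $Q=V_1\times V_2\ \sqcup\ C_1\times C_2$. Its $X$-type checks are indexed by $V_1\times C_2$, the check $(v,c)$ acting on the qubits $\{v\}\times\Gamma(c)\ \sqcup\ \Gamma(v)\times\{c\}$. Its $Z$-type generators are indexed by $C_1\times V_2$, the generator $(c,v)$ having support $\mathrm{supp}(c,v)=\Gamma(c)\times\{v\}\ \sqcup\ \{c\}\times\Gamma(v)$.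 For a set $F\subseteq Q$ (support of a $Z$ error), its syndrome $\sigma(F)\subseteq V_1\times C_2$ is the set of $X$-checks acting on an odd number of qubits of $F$. The current syndrome $\sigma\subseteq V_1\times C_2$ is the set of unsatisfied checks. Let $\mathcal F=\{F: F\subseteq \mathrm{supp}(c,v)\text{ for some }(c,v)\in C_1\times V_2\}$. For $F\neq\emptyset$, $\mathrm{score}(F)=\big(|\sigma|-|\sigma\,\triangle\,\sigma(F)|\big)/|F|$ (here $\triangle$ is symmetric difference, i.e. sum mod 2), and $\mathrm{score}(\emptyset)=0$. The Small-Set-Flip decoder, in each iteration, selects a set $F\in\mathcal F$ maximizing $\mathrm{score}$ and, if that score is positive, flips it (replacing $\sigma$ by $\sigma\triangle\sigma(F)$); otherwise it stops. *)

theory Defs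
  imports Complex_Main
begin

text \<open>A bipartite graph G = (V \<union> C, E) is given by vertex sets V, C and an edge
  set E \<subseteq> V \<times> C. Both copies G1, G2 of G are G itself.\<close>

definition nbrV :: "('v \<times> 'c) set \<Rightarrow> 'v \<Rightarrow> 'c set" where
  "nbrV E v = {c. (v, c) \<in> E}"

definition nbrC :: "('v \<times> 'c) set \<Rightarrow> 'c \<Rightarrow> 'v set" where
  "nbrC E c = {v. (v, c) \<in> E}"

definition graph_rel :: "('v \<times> 'c) set \<Rightarrow> (('v + 'c) \<times> ('v + 'c)) set" where
  "graph_rel E = {(Inl v, Inr c) | v c. (v, c) \<in> E} \<union> {(Inr c, Inl v) | v c. (v, c) \<in> E}"

definition connected_bip :: "'v set \<Rightarrow> 'c set \<Rightarrow> ('v \<times> 'c) set \<Rightarrow> bool" where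
  "connected_bip V C E \<longleftrightarrow> (V \<noteq> {} \<or> C \<noteq> {}) \<and>
     (\<forall>x \<in> Inl ` V \<union> Inr ` C. \<forall>y \<in> Inl ` V \<union> Inr ` C. (x, y) \<in> (graph_rel E)\<^sup>*)"

definition biregular_bip :: "'v set \<Rightarrow> 'c set \<Rightarrow> ('v \<times> 'c) set \<Rightarrow> nat \<Rightarrow> nat \<Rightarrow> bool" where
  "biregular_bip V C E dV dC \<longleftrightarrow> finite V \<and> finite C \<and> E \<subseteq> V \<times> C \<and>
     (\<forall>v \<in> V. card (nbrV E v) = dV) \<and> (\<forall>c \<in> C. card (nbrC E c) = dC)"

definition qubits :: "'v set \<Rightarrow> 'c set \<Rightarrow> (('v \<times> 'v) + ('c \<times> 'c)) set" where
  "qubits V C = Inl ` (V \<times> V) \<union> Inr ` (C \<times> C)"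

definition xcheck :: "('v \<times> 'c) set \<Rightarrow> 'v \<Rightarrow> 'c \<Rightarrow> (('v \<times> 'v) + ('c \<times> 'c)) set" where
  "xcheck E v c = Inl ` ({v} \<times> nbrC E c) \<union> Inr ` (nbrV E v \<times> {c})"

definition zsupp :: "('v \<times> 'c) set \<Rightarrow> 'c \<Rightarrow> 'v \<Rightarrow> (('v \<times> 'v) + ('c \<times> 'c)) set" where
  "zsupp E c v = Inl ` (nbrC E c \<times> {v}) \<union> Inr ` ({c} \<times> nbrV E v)"

definition syndrome :: "'v set \<Rightarrow> 'c set \<Rightarrow> ('v \<times> 'c) set \<Rightarrow> (('v \<times> 'v) + ('c \<times> 'c)) set \<Rightarrow> ('v \<times> 'c) set" where
  "syndrome V C E F = {(v, c) \<in> V \<times> C. odd (card (F \<inter> xcheck E v c))}"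

definition symdiff :: "'a set \<Rightarrow> 'a set \<Rightarrow> 'a set" where
  "symdiff A B = (A - B) \<union> (B - A)"

definition small_sets :: "'v set \<Rightarrow> 'c set \<Rightarrow> ('v \<times> 'c) set \<Rightarrow> (('v \<times> 'v) + ('c \<times> 'c)) set set" where
  "small_sets V C E = {F. \<exists>c \<in> C. \<exists>v \<in> V. F \<subseteq> zsupp E c v}"

definition score :: "'v set \<Rightarrow> 'c set \<Rightarrow> ('v \<times> 'c) set \<Rightarrow> ('v \<times> 'c) set \<Rightarrow> (('v \<times> 'v) + ('c \<times> 'c)) set \<Rightarrow> real" where
  "score V C E \<sigma> F = (if F = {} then 0 else
     (real (card \<sigma>) - real (card (symdiff \<sigma> (syndrome V C E F)))) / real (card F))"

end

theory Submission
  imports Defs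
begin

definition synd :: "'x set \<Rightarrow> 'y set \<Rightarrow> 'x set \<Rightarrow> 'y set \<Rightarrow> ('x \<times> 'y) set" where
  "synd A P Q B = {(x,y). (x \<in> A \<and> y \<in> P) \<noteq> (x \<in> Q \<and> y \<in> B)}"

definition num :: "('x \<times> 'y) set \<Rightarrow> ('x \<times> 'y) set \<Rightarrow> int" where
  "num \<sigma> S = int (card (\<sigma> \<inter> S)) - int (card (S - \<sigma>))"

lemma abstract_row:
  assumes fP: "finite P" and fQ: "finite Q" and AQ: "A \<subseteq> Q" and BP: "B \<subseteq> P"
    and Q2: "card Q \<ge> 2" and sig: "\<sigma> \<subseteq> {x1} \<times> UNIV" and fs: "finite \<sigma>"
  shows "num \<sigma> (synd A P Q B) \<le> 0 \<or> (x1 \<in> Q \<and> ((A = {x1} \<and> B = {}) \<or>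
      (num \<sigma> (synd A P Q B) \<le> num \<sigma> ({x1} \<times> P) \<and> card A + card B \<ge> 2)))"
proof -
  define S where "S = synd A P Q B"
  define T where "T = ({x1} \<times> P)"
  define R where "R = S \<inter> ({x1} \<times> UNIV)"
  define Ot where "Ot = S - ({x1} \<times> UNIV)"
  have SQP: "S \<subseteq> Q \<times> P" using AQ BP unfolding S_def synd_def by auto
  have fS: "finite S" using SQP fP fQ finite_subset by blast
  have fR: "finite R" "finite Ot" using fS R_def Ot_def by auto
  have fT: "finite T" using fP T_def by auto
  have e1: "\<sigma> \<inter> S = \<sigma> \<inter> R" using sig R_def by auto
  have e2: "S - \<sigma> = (R - \<sigma>) \<union> Ot" "(R - \<sigma>) \<inter> Ot = {}" using sig R_def Ot_def by auto
  have Neq: "num \<sigma> S = int (card (\<sigma> \<inter> R)) - int (card (R - \<sigma>)) - int (card Ot)"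
    unfolding num_def e1 e2(1) using card_Un_disjoint[OF _ _ e2(2)] fR by simp
  have RT: "R \<subseteq> T" using BP unfolding R_def T_def S_def synd_def by auto
  have b1: "num \<sigma> S \<le> int (card R) - int (card Ot)"
    proof -
    have "card (\<sigma> \<inter> R) \<le> card R" using fR by (intro card_mono) auto
    then show ?thesis using Neq by linarith
  qed
  have c1: "card (\<sigma> \<inter> R) \<le> card (\<sigma> \<inter> T)" using RT fT by (intro card_mono) auto
  have c2: "card (T - \<sigma>) \<le> card (R - \<sigma>) + card (T - R)"
  proof -
    have "card (T - \<sigma>) \<le> card ((R - \<sigma>) \<union> (T - R))" using fR fT by (intro card_mono) auto
    also have "\<dots> \<le> card (R - \<sigma>) + card (T - R)" by (rule card_Un_le)
    finally show ?thesis .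
  qed
  have b2: "num \<sigma> S \<le> num \<sigma> T + int (card (T - R)) - int (card Ot)"
    using Neq c1 c2 unfolding num_def by linarith
  have fA: "finite A" "finite B" using AQ BP fP fQ finite_subset by auto
  have main: "num \<sigma> S \<le> 0 \<or> (x1 \<in> Q \<and> ((A = {x1} \<and> B = {}) \<or>
      (num \<sigma> S \<le> num \<sigma> T \<and> card A + card B \<ge> 2)))"
  proof (cases "x1 \<in> Q")
    case False
    then have "R = {}" using AQ unfolding R_def S_def synd_def by auto
    then have "num \<sigma> S \<le> 0" using b1 by simp
        then show ?thesis by (rule disjI1)
  next
    case xQ: True
    obtain u where u: "u \<in> Q" "u \<noteq> x1"
    proof -
      have "\<not> Q \<subseteq> {x1}" proof
        assume "Q \<subseteq> {x1}" then have "card Q \<le> card {x1}" by (intro card_mono) auto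
        then show False using Q2 by simp
      qed
      then show ?thesis using that by blast
    qed
    show ?thesis
    proof (cases "x1 \<in> A")
      case xA: True
      have R: "R = {x1} \<times> (P - B)" using xA xQ BP unfolding R_def S_def synd_def by auto
      have TR: "T - R = {x1} \<times> B" using R BP T_def by auto
      show ?thesis
      proof (cases "\<exists>w\<in>A. w \<noteq> x1")
        case True
        then obtain w where w: "w \<in> A" "w \<noteq> x1" by blast
        have "{w} \<times> (P - B) \<subseteq> Ot" using w AQ unfolding Ot_def S_def synd_def by auto
        then have "card ({w} \<times> (P - B)) \<le> card Ot" using fR by (intro card_mono) auto
        then have "card R \<le> card Ot" using R by (simp add: card_cartesian_product_singleton)
        then have "num \<sigma> S \<le> 0" using b1 by linarith
        then show ?thesis by (rule disjI1)
      next
        case False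
        then have A1: "A = {x1}" using xA by blast
        show ?thesis
        proof (cases "B = {}")
          case True then show ?thesis using A1 xQ by blast
        next
          case Bne: False
          have "u \<notin> A" using A1 u by auto
          then have "{u} \<times> B \<subseteq> Ot" using u unfolding Ot_def S_def synd_def by auto
          then have "card ({u} \<times> B) \<le> card Ot" using fR by (intro card_mono) auto
          then have "card (T - R) \<le> card Ot" using TR by (simp add: card_cartesian_product_singleton)
          moreover have "card B \<ge> 1" using Bne fA by (simp add: Suc_le_eq card_gt_0_iff)
          ultimately have "num \<sigma> S \<le> num \<sigma> T" "card A + card B \<ge> 2" using b2 A1 by auto
          then show ?thesis using xQ by blast
        qed
      qed
    next
      case xA: False
      have R: "R = {x1} \<times> B" using xA xQ BP unfolding R_def S_def synd_def by auto
      have TR: "T - R = {x1} \<times> (P - B)" using R BP T_def by auto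
      show ?thesis
      proof (cases "\<exists>w\<in>Q. w \<notin> A \<and> w \<noteq> x1")
        case True
        then obtain w where w: "w \<in> Q" "w \<notin> A" "w \<noteq> x1" by blast
        have "{w} \<times> B \<subseteq> Ot" using w unfolding Ot_def S_def synd_def by auto
        then have "card ({w} \<times> B) \<le> card Ot" using fR by (intro card_mono) auto
        then have "card R \<le> card Ot" using R by (simp add: card_cartesian_product_singleton)
        then have "num \<sigma> S \<le> 0" using b1 by linarith
        then show ?thesis by (rule disjI1)
      next
        case False
        then have uA: "u \<in> A" using u by blast
        have "{u} \<times> (P - B) \<subseteq> Ot" using uA u AQ unfolding Ot_def S_def synd_def by auto
        then have "card ({u} \<times> (P - B)) \<le> card Ot" using fR by (intro card_mono) auto
        then have le: "card (T - R) \<le> card Ot" using TR by (simp add: card_cartesian_product_singleton)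
        show ?thesis
        proof (cases "B = {}")
          case True
          then have "R = {}" using R by simp
          then have "num \<sigma> S \<le> 0" using b1 by simp
        then show ?thesis by (rule disjI1)
        next
          case Bne: False
          have "card B \<ge> 1" using Bne fA by (simp add: Suc_le_eq card_gt_0_iff)
          moreover have "card A \<ge> 1" using uA fA by (simp add: Suc_le_eq card_gt_0_iff) blast
          ultimately have "card A + card B \<ge> 2" by linarith
          moreover have "num \<sigma> S \<le> num \<sigma> T" using b2 le by linarith
          ultimately show ?thesis using xQ by blast
        qed
      qed
    qed
  qed
  then show ?thesis by (simp only: S_def T_def)
qed


lemma num_real:
  assumes "finite \<sigma>" "finite S"
  shows "real (card \<sigma>) - real (card (symdiff \<sigma> S)) = real_of_int (num \<sigma> S)"
proof -
  have "symdiff \<sigma> S = (\<sigma> - S) \<union> (S - \<sigma>)" by (simp add: symdiff_def)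
  then have 1: "card (symdiff \<sigma> S) = card (\<sigma> - S) + card (S - \<sigma>)"
    using assms by (simp add: card_Un_disjoint Int_Diff_disjoint Diff_Int_distrib2 disjoint_iff)
  have "\<sigma> = (\<sigma> - S) \<union> (\<sigma> \<inter> S)" by blast
  then have 2: "card \<sigma> = card (\<sigma> - S) + card (\<sigma> \<inter> S)"
    using assms by (metis Diff_Diff_Int Int_Diff_disjoint Int_commute card_Un_disjoint finite_Diff finite_Int)
  show ?thesis using 1 2 unfolding num_def by simp
qed

lemma num_swap: "num (prod.swap ` \<sigma>) (prod.swap ` S) = num \<sigma> S"
proof -
  have inj: "inj prod.swap" by (simp add: inj_on_def)
  have "prod.swap ` \<sigma> \<inter> prod.swap ` S = prod.swap ` (\<sigma> \<inter> S)" using inj by (simp add: image_Int)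
  moreover have "prod.swap ` S - prod.swap ` \<sigma> = prod.swap ` (S - \<sigma>)" using inj by (simp add: image_set_diff)
  ultimately show ?thesis unfolding num_def using inj
    by (simp add: card_image inj_on_subset[OF inj])
qed

lemma synd_swap: "synd B Q P A = prod.swap ` synd A P Q B"
  unfolding synd_def by (auto simp: image_def)

lemma abstract_col:
  assumes fP: "finite P" and fQ: "finite Q" and AQ: "A \<subseteq> Q" and BP: "B \<subseteq> P"
    and P2: "card P \<ge> 2" and sig: "\<sigma> \<subseteq> UNIV \<times> {y2}" and fs: "finite \<sigma>"
  shows "num \<sigma> (synd A P Q B) \<le> 0 \<or> (y2 \<in> P \<and> ((A = {} \<and> B = {y2}) \<or>
      (num \<sigma> (synd A P Q B) \<le> num \<sigma> (Q \<times> {y2}) \<and> card A + card B \<ge> 2)))"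
proof -
  have s: "prod.swap ` \<sigma> \<subseteq> {y2} \<times> UNIV" using sig by auto
  have h: "num (prod.swap ` \<sigma>) (synd B Q P A) \<le> 0 \<or> (y2 \<in> P \<and> ((B = {y2} \<and> A = {}) \<or>
      (num (prod.swap ` \<sigma>) (synd B Q P A) \<le> num (prod.swap ` \<sigma>) ({y2} \<times> Q) \<and> card B + card A \<ge> 2)))"
    using abstract_row[OF fQ fP BP AQ P2 s finite_imageI[OF fs]] .
  have e1: "num (prod.swap ` \<sigma>) (synd B Q P A) = num \<sigma> (synd A P Q B)"
    by (subst synd_swap) (rule num_swap)
  have sw: "{y2} \<times> Q = prod.swap ` (Q \<times> {y2})" by (auto simp: image_def)
  have e2: "num (prod.swap ` \<sigma>) ({y2} \<times> Q) = num \<sigma> (Q \<times> {y2})" unfolding sw by (rule num_swap)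
  show ?thesis using h unfolding e1 e2 add.commute[of "card B"] by blast
qed

lemma bridge_syn:
  assumes EVC: "E \<subseteq> V \<times> C"
    and F: "F = Inl ` (A \<times> {v}) \<union> Inr ` ({c} \<times> B)"
    and AQ: "A \<subseteq> nbrC E c" and BP: "B \<subseteq> nbrV E v"
  shows "syndrome V C E F = synd A (nbrV E v) (nbrC E c) B"
proof (rule set_eqI, clarify)
  fix u d
  define p where "p = (u \<in> A \<and> (v, d) \<in> E)"
  define q where "q = (d \<in> B \<and> (u, c) \<in> E)"
  have key: "F \<inter> xcheck E u d = (if p then {Inl (u, v)} else {}) \<union> (if q then {Inr (c, d)} else {})"
    unfolding F xcheck_def p_def q_def nbrC_def nbrV_def by auto
  have "card (F \<inter> xcheck E u d) = (if p then 1 else 0) + (if q then 1 else 0)"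
    unfolding key by auto
  then have odd: "odd (card (F \<inter> xcheck E u d)) \<longleftrightarrow> p \<noteq> q" by auto
  have "((u, d) \<in> V \<times> C \<and> p \<noteq> q) \<longleftrightarrow> ((u \<in> A \<and> d \<in> nbrV E v) \<noteq> (u \<in> nbrC E c \<and> d \<in> B))"
    using AQ BP EVC unfolding p_def q_def nbrC_def nbrV_def by blast
  then show "((u, d) \<in> syndrome V C E F) = ((u, d) \<in> synd A (nbrV E v) (nbrC E c) B)"
    unfolding syndrome_def synd_def using odd by simp
qed

lemma bridge_card:
  assumes "F = Inl ` (A \<times> {v}) \<union> Inr ` ({c} \<times> B)" "finite A" "finite B"
  shows "card F = card A + card B"
proof -
  have 1: "card (Inl ` (A \<times> {v}) :: ('a \<times> 'b + 'c \<times> 'd) set) = card A"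
    by (simp add: card_image card_cartesian_product)
  have 2: "card (Inr ` ({c} \<times> B) :: ('a \<times> 'b + 'c \<times> 'd) set) = card B"
    by (simp add: card_image card_cartesian_product)
  have 3: "Inl ` (A \<times> {v}) \<inter> (Inr ` ({c} \<times> B) :: ('a \<times> 'b + 'c \<times> 'd) set) = {}" by auto
  show ?thesis unfolding assms(1) using 1 2 3 assms(2,3) by (simp add: card_Un_disjoint)
qed

lemma decomp:
  assumes "F \<subseteq> zsupp E c v"
  shows "F = Inl ` ({u. Inl (u, v) \<in> F} \<times> {v}) \<union> Inr ` ({c} \<times> {d. Inr (c, d) \<in> F})"
    "{u. Inl (u, v) \<in> F} \<subseteq> nbrC E c" "{d. Inr (c, d) \<in> F} \<subseteq> nbrV E v"
  using assms unfolding zsupp_def by (auto simp: image_def)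

lemma synd_single_row: "x1 \<in> Q \<Longrightarrow> synd {x1} P Q {} = {x1} \<times> P"
  unfolding synd_def by auto

lemma synd_single_col: "y2 \<in> P \<Longrightarrow> synd {} P Q {y2} = Q \<times> {y2}"
  unfolding synd_def by auto

lemma divlt:
  fixes n n' k :: real
  assumes "n / k > 0" "n \<le> n'" "k \<ge> 2"
  shows "n / k < n'"
proof -
  have "n > 0" using assms by (simp add: zero_less_divide_iff)
  then have "n / k \<le> n / 2" using assms by (intro divide_left_mono) auto
  then show ?thesis using \<open>n > 0\<close> assms by linarith
qed

theorem lemma1:
  fixes V :: "'v set" and C :: "'c set" and E :: "('v \<times> 'c) set"
    and dV dC :: nat and \<sigma> :: "('v \<times> 'c) set"
  assumes "biregular_bip V C E dV dC"
    and "connected_bip V C E"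
    and "dV \<ge> 2" and "dC \<ge> 2"
    and "\<exists>Err. Err \<subseteq> qubits V C \<and> \<sigma> = syndrome V C E Err"
    and "\<sigma> \<noteq> {}"
  shows "(\<forall>v1 \<in> V. \<sigma> \<subseteq> {v1} \<times> C \<longrightarrow>
            (\<forall>F \<in> small_sets V C E.
               score V C E \<sigma> F = Max (score V C E \<sigma> ` small_sets V C E) \<and> score V C E \<sigma> F > 0
               \<longrightarrow> F \<subseteq> Inl ` ({v1} \<times> V)))
       \<and> (\<forall>c2 \<in> C. \<sigma> \<subseteq> V \<times> {c2} \<longrightarrow>
            (\<forall>F \<in> small_sets V C E.
               score V C E \<sigma> F = Max (score V C E \<sigma> ` small_sets V C E) \<and> score V C E \<sigma> F > 0
               \<longrightarrow> F \<subseteq> Inr ` (C \<times> {c2})))"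
proof -
  have fV: "finite V" and fC: "finite C" and EVC: "E \<subseteq> V \<times> C"
    and cV: "\<And>v. v \<in> V \<Longrightarrow> card (nbrV E v) = dV" and cC: "\<And>c. c \<in> C \<Longrightarrow> card (nbrC E c) = dC"
    using assms(1) unfolding biregular_bip_def by auto
  obtain Err where Err: "\<sigma> = syndrome V C E Err" using assms(5) by blast
  have "\<sigma> \<subseteq> V \<times> C" unfolding Err syndrome_def by auto
  then have fs: "finite \<sigma>" using fV fC finite_subset by blast
  have fnV: "finite (nbrV E v)" for v
  proof -
    have "nbrV E v \<subseteq> C" using EVC unfolding nbrV_def by auto
    then show ?thesis using fC finite_subset by blast
  qed
  have fnC: "finite (nbrC E c)" for c
  proof -
    have "nbrC E c \<subseteq> V" using EVC unfolding nbrC_def by auto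
    then show ?thesis using fV finite_subset by blast
  qed
  have fz: "finite (zsupp E c v)" for c v unfolding zsupp_def using fnV fnC by auto
  have "small_sets V C E \<subseteq> (\<Union>c\<in>C. \<Union>v\<in>V. Pow (zsupp E c v))"
    unfolding small_sets_def by auto
  moreover have "finite (\<Union>c\<in>C. \<Union>v\<in>V. Pow (zsupp E c v))" using fV fC fz by auto
  ultimately have fss: "finite (small_sets V C E)" by (rule finite_subset)
  have maxge: "score V C E \<sigma> F' \<le> Max (score V C E \<sigma> ` small_sets V C E)"
    if "F' \<in> small_sets V C E" for F' using fss that by (intro Max_ge) auto
  have gen: "\<exists>c\<in>C. \<exists>v\<in>V. \<exists>A B. F = Inl ` (A \<times> {v}) \<union> Inr ` ({c} \<times> B) \<and>
      A \<subseteq> nbrC E c \<and> B \<subseteq> nbrV E v"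
    if FS: "F \<in> small_sets V C E" for F
  proof -
    obtain c v where cv: "c \<in> C" "v \<in> V" "F \<subseteq> zsupp E c v" using FS unfolding small_sets_def by blast
    show ?thesis using decomp[OF cv(3)] cv(1,2) by blast
  qed
  have scoreeq: "score V C E \<sigma> F = real_of_int (num \<sigma> (synd A (nbrV E v) (nbrC E c) B)) / real (card A + card B)"
    if "F = Inl ` (A \<times> {v}) \<union> Inr ` ({c} \<times> B)" "A \<subseteq> nbrC E c" "B \<subseteq> nbrV E v" "F \<noteq> {}"
    for F A B c v
  proof -
    have fA: "finite A" "finite B" using that(2,3) fnC fnV finite_subset by blast+
    have sy: "syndrome V C E F = synd A (nbrV E v) (nbrC E c) B" by (rule bridge_syn[OF EVC that(1-3)])
    have "synd A (nbrV E v) (nbrC E c) B \<subseteq> nbrC E c \<times> nbrV E v"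
      using that(2,3) unfolding synd_def by auto
    then have fsy: "finite (synd A (nbrV E v) (nbrC E c) B)" using fnC fnV finite_subset by blast
    show ?thesis unfolding score_def using that(4) sy num_real[OF fs fsy] bridge_card[OF that(1) fA]
      by simp
  qed
  have inss: "Inl ` (A \<times> {v}) \<union> Inr ` ({c} \<times> B) \<in> small_sets V C E"
    if "A \<subseteq> nbrC E c" "B \<subseteq> nbrV E v" "c \<in> C" "v \<in> V" for A B c v
    using that unfolding small_sets_def zsupp_def by blast
  show ?thesis
  proof (intro conjI ballI impI)
    fix v1 F
    assume v1: "v1 \<in> V" and sig: "\<sigma> \<subseteq> {v1} \<times> C" and F: "F \<in> small_sets V C E"
      and h: "score V C E \<sigma> F = Max (score V C E \<sigma> ` small_sets V C E) \<and> 0 < score V C E \<sigma> F"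
    obtain c v A B where c: "c \<in> C" and v: "v \<in> V" and FA: "F = Inl ` (A \<times> {v}) \<union> Inr ` ({c} \<times> B)"
      and AQ: "A \<subseteq> nbrC E c" and BP: "B \<subseteq> nbrV E v" using gen[OF F] by blast
    have Fne: "F \<noteq> {}" using h unfolding score_def by auto
    have sc: "score V C E \<sigma> F = real_of_int (num \<sigma> (synd A (nbrV E v) (nbrC E c) B)) / real (card A + card B)"
      by (rule scoreeq[OF FA AQ BP Fne])
    have s1: "\<sigma> \<subseteq> {v1} \<times> UNIV" using sig by auto
    have Q2: "card (nbrC E c) \<ge> 2" using cC[OF c] assms(4) by simp
    from abstract_row[OF fnV fnC AQ BP Q2 s1 fs]
    show "F \<subseteq> Inl ` ({v1} \<times> V)"
    proof (elim disjE conjE)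
      assume "num \<sigma> (synd A (nbrV E v) (nbrC E c) B) \<le> 0"
      then have "score V C E \<sigma> F \<le> 0" unfolding sc by (simp add: divide_nonpos_nonneg)
      then show ?thesis using h by simp
    next
      assume "A = {v1}" "B = {}"
      then show ?thesis using FA v by auto
    next
      assume x: "v1 \<in> nbrC E c" and le: "num \<sigma> (synd A (nbrV E v) (nbrC E c) B) \<le> num \<sigma> ({v1} \<times> nbrV E v)"
        and k: "2 \<le> card A + card B"
      define F' where "F' = Inl ` ({v1} \<times> {v}) \<union> Inr ` ({c} \<times> ({} :: 'c set))"
      have F'ss: "F' \<in> small_sets V C E" unfolding F'_def using x c v by (intro inss) auto
      have "score V C E \<sigma> F' = real_of_int (num \<sigma> (synd {v1} (nbrV E v) (nbrC E c) {})) / real (card {v1} + card ({} :: 'c set))"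
        by (rule scoreeq) (use x in \<open>auto simp: F'_def\<close>)
      then have sF': "score V C E \<sigma> F' = real_of_int (num \<sigma> ({v1} \<times> nbrV E v))"
        by (simp only: synd_single_row[OF x]) simp
      have "score V C E \<sigma> F < real_of_int (num \<sigma> ({v1} \<times> nbrV E v))"
        unfolding sc using h sc le k by (intro divlt) auto
      then have "score V C E \<sigma> F < score V C E \<sigma> F'" using sF' by simp
      also have "\<dots> \<le> Max (score V C E \<sigma> ` small_sets V C E)" by (rule maxge[OF F'ss])
      finally show ?thesis using h by simp
    qed
  next
    fix c2 F
    assume c2: "c2 \<in> C" and sig: "\<sigma> \<subseteq> V \<times> {c2}" and F: "F \<in> small_sets V C E"
      and h: "score V C E \<sigma> F = Max (score V C E \<sigma> ` small_sets V C E) \<and> 0 < score V C E \<sigma> F"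
    obtain c v A B where c: "c \<in> C" and v: "v \<in> V" and FA: "F = Inl ` (A \<times> {v}) \<union> Inr ` ({c} \<times> B)"
      and AQ: "A \<subseteq> nbrC E c" and BP: "B \<subseteq> nbrV E v" using gen[OF F] by blast
    have Fne: "F \<noteq> {}" using h unfolding score_def by auto
    have sc: "score V C E \<sigma> F = real_of_int (num \<sigma> (synd A (nbrV E v) (nbrC E c) B)) / real (card A + card B)"
      by (rule scoreeq[OF FA AQ BP Fne])
    have s1: "\<sigma> \<subseteq> UNIV \<times> {c2}" using sig by auto
    have P2: "card (nbrV E v) \<ge> 2" using cV[OF v] assms(3) by simp
    from abstract_col[OF fnV fnC AQ BP P2 s1 fs]
    show "F \<subseteq> Inr ` (C \<times> {c2})"
    proof (elim disjE conjE)
      assume "num \<sigma> (synd A (nbrV E v) (nbrC E c) B) \<le> 0"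
      then have "score V C E \<sigma> F \<le> 0" unfolding sc by (simp add: divide_nonpos_nonneg)
      then show ?thesis using h by simp
    next
      assume "A = {}" "B = {c2}"
      then show ?thesis using FA c by auto
    next
      assume x: "c2 \<in> nbrV E v" and le: "num \<sigma> (synd A (nbrV E v) (nbrC E c) B) \<le> num \<sigma> (nbrC E c \<times> {c2})"
        and k: "2 \<le> card A + card B"
      define F' where "F' = Inl ` (({} :: 'v set) \<times> {v}) \<union> Inr ` ({c} \<times> {c2})"
      have F'ss: "F' \<in> small_sets V C E" unfolding F'_def using x c v by (intro inss) auto
      have "score V C E \<sigma> F' = real_of_int (num \<sigma> (synd {} (nbrV E v) (nbrC E c) {c2})) / real (card ({} :: 'v set) + card {c2})"
        by (rule scoreeq) (use x in \<open>auto simp: F'_def\<close>)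
      then have sF': "score V C E \<sigma> F' = real_of_int (num \<sigma> (nbrC E c \<times> {c2}))"
        by (simp only: synd_single_col[OF x]) simp
      have "score V C E \<sigma> F < real_of_int (num \<sigma> (nbrC E c \<times> {c2}))"
        unfolding sc using h sc le k by (intro divlt) auto
      then have "score V C E \<sigma> F < score V C E \<sigma> F'" using sF' by simp
      also have "\<dots> \<le> Max (score V C E \<sigma> ` small_sets V C E)" by (rule maxge[OF F'ss])
      finally show ?thesis using h by simp
    qed
  qed
qed

end
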